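(* Suppose $|\Omega| = |A| = 2$. Then ambiguous communication does not benefit the sender, i.e. $V_{\mathrm{amb}} \le V_{\mathrm{stat}}$.
   Context: Setting: $\Omega$ is a finite set of states, $A$ a finite set of receiver actions. Sender and receiver share a set of priors $P \subseteq \Delta(\Omega)$, nonempty, closed and convex; both have maxmin expected utility preferences. Payoffs are $u_s, u_r : A \times \Omega \to \mathbb{R}$ (arbitrary). A statistical experiment with finite message set $M$ is a map $\sigma: \Omega \to \Delta(M)$, written $\sigma(m\mid\omega)$. A receiver strategy is $\tau: M \to \Delta(A)$, written $\tau(a\mid m)$. For $p \in P$ and $i \in \{s,r\}$, $u_i(p,\sigma,\tau) = \sum_{\omega,m,a} p(\omega)\sigma(m\mid\omega)\tau(a\mid m)u_i(a,\omega)$ and $u_i(\sigma,\tau) = \min_{p\in P} u_i(p,\sigma,\tau)$. An ambiguous experiment is a nonempty closed convex set $\Sigma$ of statistical experiments with a common finite message set $M$; $U_i(\Sigma,\tau) = \min_{\sigma \in \Sigma} u_i(\sigma,\tau)$. Best responses: $BR(\sigma) = \arg\max_{\tau} u_r(\sigma,\tau)$ and $BR(\Sigma) = \arg\max_{\tau} U_r(\Sigma,\tau)$, maximizing over all strategies $\tau: M \to \Delta(A)$. The sender's value with statistical experiments is $V_{\mathrm{stat}} = \sup\{u_s(\sigma,\tau) : M \text{ finite}, \sigma:\Omega\to\Delta(M), \tau \in BR(\sigma)\}$, and with ambiguous experiments is $V_{\mathrm{amb}} = \sup\{U_s(\Sigma,\tau) : M \text{ finite}, \Sigma \text{ ambiguous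 experiment with message set } M, \tau \in BR(\Sigma)\}$ (the sender selects both the experiment and the receiver's best response). Ambiguous communication benefits the sender if $V_{\mathrm{amb}} > V_{\mathrm{stat}}$. *)

theory Defs
  imports "HOL-Analysis.Analysis"
begin

(* States: finite type 'w; actions: finite type 'a; messages: finite sets M of naturals. *)

definition is_prior :: "('w::finite \<Rightarrow> real) \<Rightarrow> bool" where
  "is_prior p \<longleftrightarrow> (\<forall>w. p w \<ge> 0) \<and> (\<Sum>w\<in>UNIV. p w) = 1"

definition fconvex :: "('x \<Rightarrow> real) set \<Rightarrow> bool" where
  "fconvex S \<longleftrightarrow> (\<forall>f\<in>S. \<forall>g\<in>S. \<forall>t::real. 0 \<le> t \<and> t \<le> 1 \<longrightarrow>
      (\<lambda>x. t * f x + (1 - t) * g x) \<in> S)"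

definition fconvex2 :: "('x \<Rightarrow> 'y \<Rightarrow> real) set \<Rightarrow> bool" where
  "fconvex2 S \<longleftrightarrow> (\<forall>f\<in>S. \<forall>g\<in>S. \<forall>t::real. 0 \<le> t \<and> t \<le> 1 \<longrightarrow>
      (\<lambda>x y. t * f x y + (1 - t) * g x y) \<in> S)"

definition prior_set :: "('w::finite \<Rightarrow> real) set \<Rightarrow> bool" where
  "prior_set P \<longleftrightarrow> P \<noteq> {} \<and> closed P \<and> fconvex P \<and> (\<forall>p\<in>P. is_prior p)"

definition is_exp :: "nat set \<Rightarrow> ('w::finite \<Rightarrow> nat \<Rightarrow> real) \<Rightarrow> bool" where
  "is_exp M \<sigma> \<longleftrightarrow> finite M \<and> (\<forall>w m. \<sigma> w m \<ge> 0) \<and> (\<forall>w m. m \<notin> M \<longrightarrow> \<sigma> w m = 0)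
      \<and> (\<forall>w. (\<Sum>m\<in>M. \<sigma> w m) = 1)"

definition is_strat :: "nat set \<Rightarrow> (nat \<Rightarrow> 'a::finite \<Rightarrow> real) \<Rightarrow> bool" where
  "is_strat M \<tau> \<longleftrightarrow> (\<forall>m\<in>M. (\<forall>a. \<tau> m a \<ge> 0) \<and> (\<Sum>a\<in>UNIV. \<tau> m a) = 1)"

definition eu :: "('a::finite \<Rightarrow> 'w::finite \<Rightarrow> real) \<Rightarrow> ('w \<Rightarrow> real) \<Rightarrow> nat set
     \<Rightarrow> ('w \<Rightarrow> nat \<Rightarrow> real) \<Rightarrow> (nat \<Rightarrow> 'a \<Rightarrow> real) \<Rightarrow> real" where
  "eu u p M \<sigma> \<tau> = (\<Sum>w\<in>UNIV. \<Sum>m\<in>M. \<Sum>a\<in>UNIV. p w * \<sigma> w m * \<tau> m a * u a w)"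

definition mu :: "('w::finite \<Rightarrow> real) set \<Rightarrow> ('a::finite \<Rightarrow> 'w \<Rightarrow> real) \<Rightarrow> nat set
     \<Rightarrow> ('w \<Rightarrow> nat \<Rightarrow> real) \<Rightarrow> (nat \<Rightarrow> 'a \<Rightarrow> real) \<Rightarrow> real" where
  "mu P u M \<sigma> \<tau> = (INF p\<in>P. eu u p M \<sigma> \<tau>)"

definition U_amb :: "('w::finite \<Rightarrow> real) set \<Rightarrow> ('a::finite \<Rightarrow> 'w \<Rightarrow> real) \<Rightarrow> nat set
     \<Rightarrow> ('w \<Rightarrow> nat \<Rightarrow> real) set \<Rightarrow> (nat \<Rightarrow> 'a \<Rightarrow> real) \<Rightarrow> real" where
  "U_amb P u M \<Sigma> \<tau> = (INF \<sigma>\<in>\<Sigma>. mu P u M \<sigma> \<tau>)"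

definition amb_exp :: "nat set \<Rightarrow> ('w::finite \<Rightarrow> nat \<Rightarrow> real) set \<Rightarrow> bool" where
  "amb_exp M \<Sigma> \<longleftrightarrow> \<Sigma> \<noteq> {} \<and> closed \<Sigma> \<and> fconvex2 \<Sigma> \<and> (\<forall>\<sigma>\<in>\<Sigma>. is_exp M \<sigma>)"

definition BR_stat :: "('w::finite \<Rightarrow> real) set \<Rightarrow> ('a::finite \<Rightarrow> 'w \<Rightarrow> real) \<Rightarrow> nat set
     \<Rightarrow> ('w \<Rightarrow> nat \<Rightarrow> real) \<Rightarrow> (nat \<Rightarrow> 'a \<Rightarrow> real) set" where
  "BR_stat P ur M \<sigma> = {\<tau>. is_strat M \<tau> \<and>
      (\<forall>\<tau>'. is_strat M \<tau>' \<longrightarrow> mu P ur M \<sigma> \<tau>' \<le> mu P ur M \<sigma> \<tau>)}"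

definition BR_amb :: "('w::finite \<Rightarrow> real) set \<Rightarrow> ('a::finite \<Rightarrow> 'w \<Rightarrow> real) \<Rightarrow> nat set
     \<Rightarrow> ('w \<Rightarrow> nat \<Rightarrow> real) set \<Rightarrow> (nat \<Rightarrow> 'a \<Rightarrow> real) set" where
  "BR_amb P ur M \<Sigma> = {\<tau>. is_strat M \<tau> \<and>
      (\<forall>\<tau>'. is_strat M \<tau>' \<longrightarrow> U_amb P ur M \<Sigma> \<tau>' \<le> U_amb P ur M \<Sigma> \<tau>)}"

definition V_stat :: "('w::finite \<Rightarrow> real) set \<Rightarrow> ('a::finite \<Rightarrow> 'w \<Rightarrow> real)
     \<Rightarrow> ('a \<Rightarrow> 'w \<Rightarrow> real) \<Rightarrow> real" where
  "V_stat P us ur = Sup {mu P us M \<sigma> \<tau> | M \<sigma> \<tau>. finite M \<and> is_exp M \<sigma> \<and> \<tau> \<in> BR_stat P ur M \<sigma>}"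

definition V_amb :: "('w::finite \<Rightarrow> real) set \<Rightarrow> ('a::finite \<Rightarrow> 'w \<Rightarrow> real)
     \<Rightarrow> ('a \<Rightarrow> 'w \<Rightarrow> real) \<Rightarrow> real" where
  "V_amb P us ur = Sup {U_amb P us M \<Sigma> \<tau> | M \<Sigma> \<tau>. finite M \<and> amb_exp M \<Sigma> \<and> \<tau> \<in> BR_amb P ur M \<Sigma>}"

end

theory Submission
  imports Defs
begin


definition aff :: "real \<Rightarrow> real \<Rightarrow> real \<Rightarrow> real \<times> real \<Rightarrow> real" where
  "aff k c e y = k + c * fst y + e * snd y"

definition garb :: "real \<Rightarrow> real \<Rightarrow> real \<times> real \<Rightarrow> real \<times> real" where
  "garb a b y = (a * fst y + b * (1 - fst y), a * snd y + b * (1 - snd y))"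

lemma aff_garb: "aff k c e (garb a b y) = aff k c e y + (a - 1) * (c * fst y + e * snd y)
    + b * ((c + e) - (c * fst y + e * snd y))"
  by (simp add: aff_def garb_def algebra_simps)

lemma saddle:
  fixes \<rho> a b :: real
  assumes "0 \<le> \<rho>" "\<rho> \<le> 1" "a \<le> 1" "0 \<le> b"
    and m: "\<rho> * aff k1 c1 e1 y + (1-\<rho>) * aff k2 c2 e2 y \<le> min (aff k1 c1 e1 y) (aff k2 c2 e2 y)"
    and A: "\<rho> * (c1 * fst y + e1 * snd y) + (1-\<rho>) * (c2 * fst y + e2 * snd y) \<ge> 0"
    and B: "\<rho> * ((c1+e1) - (c1 * fst y + e1 * snd y)) + (1-\<rho>) * ((c2+e2) - (c2 * fst y + e2 * snd y)) \<le> 0"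
  shows "min (aff k1 c1 e1 (garb a b y)) (aff k2 c2 e2 (garb a b y)) \<le> min (aff k1 c1 e1 y) (aff k2 c2 e2 y)"
proof -
  let ?X = "aff k1 c1 e1 (garb a b y)" and ?Y = "aff k2 c2 e2 (garb a b y)"
  let ?A = "\<rho> * (c1 * fst y + e1 * snd y) + (1-\<rho>) * (c2 * fst y + e2 * snd y)"
  let ?B = "\<rho> * ((c1+e1) - (c1 * fst y + e1 * snd y)) + (1-\<rho>) * ((c2+e2) - (c2 * fst y + e2 * snd y))"
  have "min ?X ?Y = \<rho> * min ?X ?Y + (1-\<rho>) * min ?X ?Y" by (simp add: algebra_simps)
  also have "\<dots> \<le> \<rho> * ?X + (1-\<rho>) * ?Y"
    by (intro add_mono mult_left_mono) (use assms in auto)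
  also have "\<dots> = (\<rho> * aff k1 c1 e1 y + (1-\<rho>) * aff k2 c2 e2 y) + (a - 1) * ?A + b * ?B"
    by (simp add: aff_garb algebra_simps)
  also have "\<dots> \<le> \<rho> * aff k1 c1 e1 y + (1-\<rho>) * aff k2 c2 e2 y"
  proof -
    have "(a - 1) * ?A \<le> 0" using A assms(3) by (intro mult_nonpos_nonneg) auto
    moreover have "b * ?B \<le> 0" using B assms(4) by (intro mult_nonneg_nonpos) auto
    ultimately show ?thesis by linarith
  qed
  also have "\<dots> \<le> min (aff k1 c1 e1 y) (aff k2 c2 e2 y)" by (rule m)
  finally show ?thesis .
qed

lemma planar:
  fixes K :: "(real \<times> real) set" and k1 c1 e1 k2 c2 e2 :: real
  defines "F1 \<equiv> aff k1 c1 e1" and "F2 \<equiv> aff k2 c2 e2"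
  assumes K: "compact K" "convex K" "K \<noteq> {}"
    and H: "\<And>a b \<delta>. 0 \<le> a \<Longrightarrow> a \<le> 1 \<Longrightarrow> 0 \<le> b \<Longrightarrow> b \<le> 1 \<Longrightarrow> \<delta> > 0 \<Longrightarrow>
      \<exists>y\<in>K. \<forall>z\<in>K. min (F1 (garb a b y)) (F2 (garb a b y)) < min (F1 z) (F2 z) + \<delta>"
  shows "\<exists>y\<in>K. \<forall>a b. 0 \<le> a \<longrightarrow> a \<le> 1 \<longrightarrow> 0 \<le> b \<longrightarrow> b \<le> 1 \<longrightarrow>
      min (F1 (garb a b y)) (F2 (garb a b y)) \<le> min (F1 y) (F2 y)"
proof -
  define A1 where "A1 y = c1 * fst y + e1 * snd y" for y :: "real \<times> real"
  define A2 where "A2 y = c2 * fst y + e2 * snd y" for y :: "real \<times> real"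
  define E1 where "E1 = c1 + e1"
  define E2 where "E2 = c2 + e2"
  have F1A: "F1 y = k1 + A1 y" for y by (simp add: F1_def aff_def A1_def)
  have F2A: "F2 y = k2 + A2 y" for y by (simp add: F2_def aff_def A2_def)
  have c1: "continuous_on K F1" unfolding F1_def aff_def by (intro continuous_intros)
  have c2: "continuous_on K F2" unfolding F2_def aff_def by (intro continuous_intros)
  obtain y1 where y1: "y1 \<in> K" "\<And>z. z \<in> K \<Longrightarrow> F1 y1 \<le> F1 z"
    using continuous_attains_inf[OF K(1) K(3) c1] by blast
  obtain y2 where y2: "y2 \<in> K" "\<And>z. z \<in> K \<Longrightarrow> F2 y2 \<le> F2 z"
    using continuous_attains_inf[OF K(1) K(3) c2] by blast
  define \<alpha>1 where "\<alpha>1 = A1 y1"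
  define \<alpha>2 where "\<alpha>2 = A2 y2"
  define \<beta>1 where "\<beta>1 = E1 - \<alpha>1"
  define \<beta>2 where "\<beta>2 = E2 - \<alpha>2"
  define m1 where "m1 = F1 y1"
  define m2 where "m2 = F2 y2"
  define r where "r = min m1 m2"
  have A1min: "\<alpha>1 \<le> A1 z" if "z \<in> K" for z using y1(2)[OF that] by (simp add: F1A \<alpha>1_def)
  have A2min: "\<alpha>2 \<le> A2 z" if "z \<in> K" for z using y2(2)[OF that] by (simp add: F2A \<alpha>2_def)
  have m1a: "m1 = k1 + \<alpha>1" using F1A m1_def \<alpha>1_def by simp
  have m2a: "m2 = k2 + \<alpha>2" using F2A m2_def \<alpha>2_def by simp
  have lowb1: "F1 (garb (1-s) t z) \<ge> m1 + (- s * \<alpha>1 + t * \<beta>1)"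
    if "0 \<le> s" "0 \<le> t" "s + t \<le> 1" "z \<in> K" for s t z
  proof -
    have e: "F1 (garb (1-s) t z) = k1 + t * E1 + (1 - s - t) * A1 z"
      by (simp add: F1_def aff_def garb_def A1_def E1_def algebra_simps)
    have "(1 - s - t) * \<alpha>1 \<le> (1 - s - t) * A1 z"
      using that A1min by (intro mult_left_mono) auto
    then show ?thesis unfolding e m1a \<beta>1_def by (simp add: algebra_simps)
  qed
  have lowb2: "F2 (garb (1-s) t z) \<ge> m2 + (- s * \<alpha>2 + t * \<beta>2)"
    if "0 \<le> s" "0 \<le> t" "s + t \<le> 1" "z \<in> K" for s t z
  proof -
    have e: "F2 (garb (1-s) t z) = k2 + t * E2 + (1 - s - t) * A2 z"
      by (simp add: F2_def aff_def garb_def A2_def E2_def algebra_simps)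
    have "(1 - s - t) * \<alpha>2 \<le> (1 - s - t) * A2 z"
      using that A2min by (intro mult_left_mono) auto
    then show ?thesis unfolding e m2a \<beta>2_def by (simp add: algebra_simps)
  qed
  have evpos: "eventually (\<lambda>\<epsilon>. r < m + \<epsilon> * X) (at_right (0::real))"
    if "r \<le> m" "r < m \<or> 0 < X" for m X
  proof (cases "r < m")
    case True
    have "((\<lambda>\<epsilon>. m + \<epsilon> * X) \<longlongrightarrow> m + 0 * X) (at_right (0::real))"
      by (intro tendsto_intros)
    then have "((\<lambda>\<epsilon>. m + \<epsilon> * X) \<longlongrightarrow> m) (at_right (0::real))" by simp
    from order_tendstoD(1)[OF this True] show ?thesis .
  next
    case False
    with that have X: "0 < X" by auto
    show ?thesis using eventually_at_right_less[of "0::real"]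
    proof eventually_elim
      case (elim \<epsilon>)
      then have "0 < \<epsilon> * X" using X by simp
      then show ?case using that(1) by linarith
    qed
  qed
  have nodir: False
    if st: "0 \<le> s" "0 \<le> t" and d1: "r < m1 \<or> 0 < - s * \<alpha>1 + t * \<beta>1"
      and d2: "r < m2 \<or> 0 < - s * \<alpha>2 + t * \<beta>2" for s t
  proof -
    have ev1: "eventually (\<lambda>\<epsilon>. r < m1 + \<epsilon> * (- s * \<alpha>1 + t * \<beta>1)) (at_right (0::real))"
      by (rule evpos) (use d1 r_def in auto)
    have ev2: "eventually (\<lambda>\<epsilon>. r < m2 + \<epsilon> * (- s * \<alpha>2 + t * \<beta>2)) (at_right (0::real))"
      by (rule evpos) (use d2 r_def in auto)
    have "((\<lambda>\<epsilon>. \<epsilon> * (s + t)) \<longlongrightarrow> 0 * (s + t)) (at_right (0::real))"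
      by (intro tendsto_intros)
    then have "((\<lambda>\<epsilon>. \<epsilon> * (s + t)) \<longlongrightarrow> 0) (at_right (0::real))" by simp
    from order_tendstoD(2)[OF this, of 1]
    have ev3: "eventually (\<lambda>\<epsilon>. \<epsilon> * (s + t) < 1) (at_right (0::real))" by simp
    have "eventually (\<lambda>\<epsilon>. r < m1 + \<epsilon> * (- s * \<alpha>1 + t * \<beta>1) \<and> r < m2 + \<epsilon> * (- s * \<alpha>2 + t * \<beta>2)
        \<and> \<epsilon> * (s + t) < 1 \<and> 0 < \<epsilon>) (at_right (0::real))"
      using ev1 ev2 ev3 eventually_at_right_less[of "0::real"] by eventually_elim auto
    then obtain \<epsilon> :: real where eps: "r < m1 + \<epsilon> * (- s * \<alpha>1 + t * \<beta>1)"
      "r < m2 + \<epsilon> * (- s * \<alpha>2 + t * \<beta>2)" "\<epsilon> * (s + t) < 1" "0 < \<epsilon>"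
      using eventually_happens'[OF trivial_limit_at_right_real] by blast
    define s' where "s' = \<epsilon> * s"
    define t' where "t' = \<epsilon> * t"
    have s': "0 \<le> s'" "0 \<le> t'" "s' + t' \<le> 1"
      using eps st by (auto simp: s'_def t'_def algebra_simps)
    define \<delta> where "\<delta> = min (m1 + \<epsilon> * (- s * \<alpha>1 + t * \<beta>1)) (m2 + \<epsilon> * (- s * \<alpha>2 + t * \<beta>2)) - r"
    have \<delta>: "\<delta> > 0" using eps by (simp add: \<delta>_def)
    obtain y where y: "y \<in> K" "\<And>z. z \<in> K \<Longrightarrow> min (F1 (garb (1-s') t' y)) (F2 (garb (1-s') t' y))
        < min (F1 z) (F2 z) + \<delta>"
      using H[of "1-s'" t' \<delta>] s' \<delta> by auto
    obtain z where z: "z \<in> K" "min (F1 z) (F2 z) \<le> r"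
    proof (cases "m1 \<le> m2")
      case True then show ?thesis using that[of y1] y1 by (auto simp: r_def m1_def)
    next
      case False then show ?thesis using that[of y2] y2 by (auto simp: r_def m2_def)
    qed
    have l1: "F1 (garb (1-s') t' y) \<ge> m1 + \<epsilon> * (- s * \<alpha>1 + t * \<beta>1)"
      using lowb1[OF s' y(1)] by (simp add: s'_def t'_def algebra_simps)
    have l2: "F2 (garb (1-s') t' y) \<ge> m2 + \<epsilon> * (- s * \<alpha>2 + t * \<beta>2)"
      using lowb2[OF s' y(1)] by (simp add: s'_def t'_def algebra_simps)
    have "min (F1 (garb (1-s') t' y)) (F2 (garb (1-s') t' y)) \<ge> r + \<delta>"
      using l1 l2 unfolding \<delta>_def by (smt (verit))
    with y(2)[OF z(1)] z(2) show False by linarith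
  qed
  let ?goal = "\<lambda>y. \<forall>a b. 0 \<le> a \<longrightarrow> a \<le> 1 \<longrightarrow> 0 \<le> b \<longrightarrow> b \<le> 1 \<longrightarrow>
      min (F1 (garb a b y)) (F2 (garb a b y)) \<le> min (F1 y) (F2 y)"
  have sad: "?goal y" if "0 \<le> \<rho>" "\<rho> \<le> 1" "\<rho> * F1 y + (1-\<rho>) * F2 y \<le> min (F1 y) (F2 y)"
    "\<rho> * A1 y + (1-\<rho>) * A2 y \<ge> 0" "\<rho> * (E1 - A1 y) + (1-\<rho>) * (E2 - A2 y) \<le> 0" for \<rho> y
    using that unfolding F1_def F2_def A1_def A2_def E1_def E2_def
    by (intro allI impI saddle) auto
  have good1: "?goal y1" if "\<alpha>1 \<ge> 0" "\<beta>1 \<le> 0" "m1 \<le> m2"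
  proof (rule sad[of 1])
    have "F2 y1 \<ge> m2" using y2(2)[OF y1(1)] m2_def by simp
    then show "1 * F1 y1 + (1 - 1) * F2 y1 \<le> min (F1 y1) (F2 y1)" using that m1_def by simp
  qed (use that \<alpha>1_def \<beta>1_def in auto)
  have good2: "?goal y2" if "\<alpha>2 \<ge> 0" "\<beta>2 \<le> 0" "m2 \<le> m1"
  proof (rule sad[of 0])
    have "F1 y2 \<ge> m1" using y1(2)[OF y2(1)] m1_def by simp
    then show "0 * F1 y2 + (1 - 0) * F2 y2 \<le> min (F1 y2) (F2 y2)" using that m2_def by simp
  qed (use that \<alpha>2_def \<beta>2_def in auto)
  have tie: "\<exists>y\<in>K. ?goal y" if th: "0 \<le> \<theta>" "\<theta> \<le> 1" "\<theta> * \<alpha>1 + (1-\<theta>) * \<alpha>2 \<ge> 0"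
    "\<theta> * E1 + (1-\<theta>) * E2 = 0" and eq: "m1 = m2" for \<theta>
  proof -
    define \<phi>0 where "\<phi>0 = F1 y2 - F2 y2"
    define \<phi>1 where "\<phi>1 = F1 y1 - F2 y1"
    have p0: "\<phi>0 \<ge> 0" using y1(2)[OF y2(1)] eq by (simp add: \<phi>0_def m1_def m2_def)
    have p1: "\<phi>1 \<le> 0" using y2(2)[OF y1(1)] eq by (simp add: \<phi>1_def m1_def m2_def)
    define t where "t = (if \<phi>0 - \<phi>1 = 0 then 0 else \<phi>0 / (\<phi>0 - \<phi>1))"
    have t01: "0 \<le> t" "t \<le> 1" using p0 p1 by (auto simp: t_def field_simps)
    have tphi: "t * \<phi>1 + (1 - t) * \<phi>0 = 0"
    proof (cases "\<phi>0 - \<phi>1 = 0")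
      case True then show ?thesis using p0 p1 by (simp add: t_def)
    next
      case False then show ?thesis by (simp add: t_def field_simps)
    qed
    define y where "y = t *\<^sub>R y1 + (1 - t) *\<^sub>R y2"
    have yK: "y \<in> K" unfolding y_def using convexD[OF K(2) y1(1) y2(1)] t01 by auto
    have Fy1: "F1 y = t * F1 y1 + (1 - t) * F1 y2"
      by (simp add: y_def F1_def aff_def algebra_simps)
    have Fy2: "F2 y = t * F2 y1 + (1 - t) * F2 y2"
      by (simp add: y_def F2_def aff_def algebra_simps)
    have tieq: "F1 y = F2 y" using tphi Fy1 Fy2 by (simp add: \<phi>0_def \<phi>1_def algebra_simps)
    have "\<theta> * \<alpha>1 + (1-\<theta>) * \<alpha>2 \<le> \<theta> * A1 y + (1-\<theta>) * A2 y"
      using A1min[OF yK] A2min[OF yK] th by (intro add_mono mult_left_mono) auto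
    then have Ap: "\<theta> * A1 y + (1-\<theta>) * A2 y \<ge> 0" using th by linarith
    have "\<theta> * (E1 - A1 y) + (1-\<theta>) * (E2 - A2 y) = (\<theta> * E1 + (1-\<theta>) * E2) - (\<theta> * A1 y + (1-\<theta>) * A2 y)"
      by (simp add: algebra_simps)
    then have Bn: "\<theta> * (E1 - A1 y) + (1-\<theta>) * (E2 - A2 y) \<le> 0" using Ap th by simp
    have "?goal y"
      by (rule sad[OF th(1,2) _ Ap Bn]) (simp add: tieq algebra_simps)
    with yK show ?thesis by blast
  qed
  show ?thesis
  proof (cases "m1 < m2")
    case True
    have "\<alpha>1 \<ge> 0" by (rule ccontr) (rule nodir[of 1 0], use True r_def in auto)
    moreover have "\<beta>1 \<le> 0" by (rule ccontr) (rule nodir[of 0 1], use True r_def in auto)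
    ultimately show ?thesis using good1 True y1(1) by auto
  next
    case False
    note F = False
    show ?thesis
    proof (cases "m2 < m1")
      case True
      have "\<alpha>2 \<ge> 0" by (rule ccontr) (rule nodir[of 1 0], use True r_def in auto)
      moreover have "\<beta>2 \<le> 0" by (rule ccontr) (rule nodir[of 0 1], use True r_def in auto)
      ultimately show ?thesis using good2 True y2(1) by auto
    next
      case False
      with F have eq: "m1 = m2" by simp
      have rr: "\<not> r < m1" "\<not> r < m2" using eq r_def by auto
      show ?thesis
      proof (cases "\<alpha>1 \<ge> 0 \<and> \<beta>1 \<le> 0")
        case True then show ?thesis using good1 eq y1(1) by auto
      next
        case n1: False
        show ?thesis
        proof (cases "\<alpha>2 \<ge> 0 \<and> \<beta>2 \<le> 0")
          case True then show ?thesis using good2 eq y2(1) by auto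
        next
          case n2: False
          have na: "\<not> (\<alpha>1 < 0 \<and> \<alpha>2 < 0)"
          proof
            assume "\<alpha>1 < 0 \<and> \<alpha>2 < 0" then show False by (intro nodir[of 1 0]) auto
          qed
          have nb: "\<not> (\<beta>1 > 0 \<and> \<beta>2 > 0)"
          proof
            assume "\<beta>1 > 0 \<and> \<beta>2 > 0" then show False by (intro nodir[of 0 1]) auto
          qed
          have cases2: "(\<alpha>1 < 0 \<and> \<beta>2 > 0 \<and> \<alpha>2 \<ge> 0 \<and> \<beta>1 \<le> 0) \<or> (\<beta>1 > 0 \<and> \<alpha>2 < 0 \<and> \<alpha>1 \<ge> 0 \<and> \<beta>2 \<le> 0)"
            using n1 n2 na nb by auto
          then show ?thesis
          proof
            assume c: "\<alpha>1 < 0 \<and> \<beta>2 > 0 \<and> \<alpha>2 \<ge> 0 \<and> \<beta>1 \<le> 0"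
            have key: "\<alpha>2 * \<beta>1 \<le> \<alpha>1 * \<beta>2"
            proof (rule ccontr)
              assume "\<not> ?thesis"
              then have "0 < - (\<beta>2 - \<beta>1) * \<alpha>1 + (\<alpha>2 - \<alpha>1) * \<beta>1"
                "0 < - (\<beta>2 - \<beta>1) * \<alpha>2 + (\<alpha>2 - \<alpha>1) * \<beta>2" by (simp_all add: algebra_simps)
              then show False using c by (intro nodir[of "\<beta>2 - \<beta>1" "\<alpha>2 - \<alpha>1"]) auto
            qed
            have E: "E1 < 0" "E2 > 0" using c \<beta>1_def \<beta>2_def by auto
            define \<theta> where "\<theta> = E2 / (E2 - E1)"
            have th: "0 \<le> \<theta>" "\<theta> \<le> 1" using E by (auto simp: \<theta>_def field_simps)
            have th1: "1 - \<theta> = - E1 / (E2 - E1)" using E by (simp add: \<theta>_def field_simps)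
            have "\<theta> * E1 + (1-\<theta>) * E2 = 0" using E unfolding th1 by (simp add: \<theta>_def field_simps)
            moreover have "\<theta> * \<alpha>1 + (1-\<theta>) * \<alpha>2 = (E2 * \<alpha>1 + (- E1) * \<alpha>2) / (E2 - E1)"
              unfolding th1 unfolding \<theta>_def by (simp only: times_divide_eq_left add_divide_distrib[symmetric] mult_minus_left)
            moreover have "E2 * \<alpha>1 + (- E1) * \<alpha>2 = \<alpha>1 * \<beta>2 - \<alpha>2 * \<beta>1"
              by (simp add: \<beta>1_def \<beta>2_def algebra_simps)
            ultimately have eqn: "\<theta> * \<alpha>1 + (1-\<theta>) * \<alpha>2 = (\<alpha>1 * \<beta>2 - \<alpha>2 * \<beta>1) / (E2 - E1)" by simp
            have nn: "\<theta> * \<alpha>1 + (1-\<theta>) * \<alpha>2 \<ge> 0" unfolding eqn by (rule divide_nonneg_pos) (use E key in auto)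
            have "\<theta> * E1 + (1-\<theta>) * E2 = 0" using E unfolding th1 by (simp add: \<theta>_def field_simps)
            then show ?thesis using tie th eq nn by blast
          next
            assume c: "\<beta>1 > 0 \<and> \<alpha>2 < 0 \<and> \<alpha>1 \<ge> 0 \<and> \<beta>2 \<le> 0"
            have key: "\<alpha>1 * \<beta>2 \<le> \<alpha>2 * \<beta>1"
            proof (rule ccontr)
              assume "\<not> ?thesis"
              then have "0 < - (\<beta>1 - \<beta>2) * \<alpha>1 + (\<alpha>1 - \<alpha>2) * \<beta>1"
                "0 < - (\<beta>1 - \<beta>2) * \<alpha>2 + (\<alpha>1 - \<alpha>2) * \<beta>2" by (simp_all add: algebra_simps)
              then show False using c by (intro nodir[of "\<beta>1 - \<beta>2" "\<alpha>1 - \<alpha>2"]) auto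
            qed
            have E: "E1 > 0" "E2 < 0" using c \<beta>1_def \<beta>2_def by auto
            define \<theta> where "\<theta> = E2 / (E2 - E1)"
            have th: "0 \<le> \<theta>" "\<theta> \<le> 1" using E by (auto simp: \<theta>_def field_simps)
            have th1: "1 - \<theta> = - E1 / (E2 - E1)" using E by (simp add: \<theta>_def field_simps)
            have "\<theta> * E1 + (1-\<theta>) * E2 = 0" using E unfolding th1 by (simp add: \<theta>_def field_simps)
            moreover have "\<theta> * \<alpha>1 + (1-\<theta>) * \<alpha>2 = (E2 * \<alpha>1 + (- E1) * \<alpha>2) / (E2 - E1)"
              unfolding th1 unfolding \<theta>_def by (simp only: times_divide_eq_left add_divide_distrib[symmetric] mult_minus_left)
            moreover have "E2 * \<alpha>1 + (- E1) * \<alpha>2 = \<alpha>1 * \<beta>2 - \<alpha>2 * \<beta>1"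
              by (simp add: \<beta>1_def \<beta>2_def algebra_simps)
            ultimately have eqn: "\<theta> * \<alpha>1 + (1-\<theta>) * \<alpha>2 = (\<alpha>1 * \<beta>2 - \<alpha>2 * \<beta>1) / (E2 - E1)" by simp
            have nn: "\<theta> * \<alpha>1 + (1-\<theta>) * \<alpha>2 \<ge> 0" unfolding eqn by (rule divide_nonpos_neg) (use E key in auto)
            have "\<theta> * E1 + (1-\<theta>) * E2 = 0" using E unfolding th1 by (simp add: \<theta>_def field_simps)
            then show ?thesis using tie th eq nn by blast
          qed
        qed
      qed
    qed
  qed
qed



locale two_setup =
  fixes w1 w2 :: "'w::finite" and a1 a2 :: "'a::finite" and P :: "('w \<Rightarrow> real) set"
  assumes W: "(UNIV::'w set) = {w1, w2}" and w12: "w1 \<noteq> w2"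
    and Aa: "(UNIV::'a set) = {a1, a2}" and a12: "a1 \<noteq> a2"
    and PS: "prior_set P"
begin

definition X :: "nat set \<Rightarrow> ('w \<Rightarrow> nat \<Rightarrow> real) \<Rightarrow> (nat \<Rightarrow> 'a \<Rightarrow> real) \<Rightarrow> real \<times> real" where
  "X M \<sigma> \<tau> = ((\<Sum>m\<in>M. \<sigma> w1 m * \<tau> m a1), (\<Sum>m\<in>M. \<sigma> w2 m * \<tau> m a1))"

definition G :: "('a \<Rightarrow> 'w \<Rightarrow> real) \<Rightarrow> 'w \<Rightarrow> real \<Rightarrow> real" where
  "G u w x = x * u a1 w + (1 - x) * u a2 w"

definition Fp :: "('a \<Rightarrow> 'w \<Rightarrow> real) \<Rightarrow> ('w \<Rightarrow> real) \<Rightarrow> real \<times> real \<Rightarrow> real" where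
  "Fp u p y = p w1 * G u w1 (fst y) + p w2 * G u w2 (snd y)"

lemma sumW: "(\<Sum>w\<in>UNIV. f w) = f w1 + f w2"
  using w12 by (simp add: W)

lemma sumA: "(\<Sum>a\<in>UNIV. f a) = f a1 + f a2"
  using a12 by (simp add: Aa)

lemma strat_a2: "is_strat M \<tau> \<Longrightarrow> m \<in> M \<Longrightarrow> \<tau> m a2 = 1 - \<tau> m a1"
  unfolding is_strat_def sumA by force

lemma strat_range: "is_strat M \<tau> \<Longrightarrow> m \<in> M \<Longrightarrow> 0 \<le> \<tau> m a1 \<and> \<tau> m a1 \<le> 1"
  unfolding is_strat_def sumA by (metis add_le_cancel_left add.right_neutral)

lemma eu_X:
  assumes "is_exp M \<sigma>" "is_strat M \<tau>"
  shows "eu u p M \<sigma> \<tau> = Fp u p (X M \<sigma> \<tau>)"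
proof -
  have sum1: "(\<Sum>m\<in>M. \<sigma> w m) = 1" for w using assms(1) by (simp add: is_exp_def)
  have inner: "(\<Sum>m\<in>M. \<Sum>a\<in>UNIV. p w * \<sigma> w m * \<tau> m a * u a w) = p w * G u w (\<Sum>m\<in>M. \<sigma> w m * \<tau> m a1)" for w
  proof -
    have "(\<Sum>m\<in>M. \<Sum>a\<in>UNIV. p w * \<sigma> w m * \<tau> m a * u a w)
        = (\<Sum>m\<in>M. (\<sigma> w m * \<tau> m a1) * (p w * (u a1 w - u a2 w)) + \<sigma> w m * (p w * u a2 w))"
      by (rule sum.cong) (auto simp: sumA strat_a2[OF assms(2)] algebra_simps)
    also have "\<dots> = (\<Sum>m\<in>M. \<sigma> w m * \<tau> m a1) * (p w * (u a1 w - u a2 w)) + (\<Sum>m\<in>M. \<sigma> w m) * (p w * u a2 w)"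
      by (simp add: sum.distrib sum_distrib_right)
    also have "\<dots> = p w * G u w (\<Sum>m\<in>M. \<sigma> w m * \<tau> m a1)"
      using sum1[of w] by (simp add: G_def algebra_simps)
    finally show ?thesis .
  qed
  show ?thesis unfolding eu_def sumW inner Fp_def X_def by simp
qed

definition emb :: "real \<Rightarrow> 'w \<Rightarrow> real" where
  "emb \<pi> = (\<lambda>w. if w = w1 then \<pi> else 1 - \<pi>)"

lemma Pne: "P \<noteq> {}" and Pcl: "closed P" and Ppr: "p \<in> P \<Longrightarrow> is_prior p"
  using PS by (auto simp: prior_set_def)

lemma prior_emb: assumes "p \<in> P" shows "p = emb (p w1)"
proof
  fix w
  have "p w1 + p w2 = 1" using Ppr[OF assms] by (simp add: is_prior_def sumW)
  moreover have "w = w1 \<or> w = w2" using W by auto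
  ultimately show "p w = emb (p w1) w" using w12 by (auto simp: emb_def)
qed

lemma prior_range: assumes "p \<in> P" shows "0 \<le> p w1" "p w1 \<le> 1"
proof -
  have "p w1 + p w2 = 1" "p w1 \<ge> 0" "p w2 \<ge> 0" using Ppr[OF assms] by (auto simp: is_prior_def sumW)
  then show "0 \<le> p w1" "p w1 \<le> 1" by auto
qed

definition Pi :: "real set" where "Pi = emb -` P"

lemma emb_cont: "continuous (at x) emb"
proof -
  have "continuous_on UNIV emb"
  proof (rule continuous_on_coordinatewise_then_product)
    fix w
    show "continuous_on UNIV (\<lambda>x. emb x w)"
      by (cases "w = w1") (auto simp: emb_def intro!: continuous_intros)
  qed
  then show ?thesis by (simp add: continuous_on_eq_continuous_at)
qed

lemma Pi_closed: "closed Pi"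
  unfolding Pi_def by (rule continuous_closed_vimage[OF Pcl emb_cont])

lemma Pi_mem: "p \<in> P \<Longrightarrow> p w1 \<in> Pi"
  unfolding Pi_def using prior_emb by force

lemma Pi_range: "\<pi> \<in> Pi \<Longrightarrow> 0 \<le> \<pi> \<and> \<pi> \<le> 1"
  using prior_range[of "emb \<pi>"] by (auto simp: Pi_def emb_def)

lemma Pi_ne: "Pi \<noteq> {}" using Pne Pi_mem by blast

lemma Pi_bdd: "bdd_below Pi" "bdd_above Pi"
  using Pi_range by (meson bdd_belowI, meson bdd_aboveI)

definition lo :: real where "lo = Inf Pi"
definition hi :: real where "hi = Sup Pi"

lemma lo_in: "lo \<in> Pi" unfolding lo_def by (rule closed_contains_Inf[OF Pi_ne Pi_bdd(1) Pi_closed])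
lemma hi_in: "hi \<in> Pi" unfolding hi_def by (rule closed_contains_Sup[OF Pi_ne Pi_bdd(2) Pi_closed])

definition pl where "pl = emb lo"
definition ph where "ph = emb hi"

lemma pl_in: "pl \<in> P" using lo_in by (simp add: pl_def Pi_def)
lemma ph_in: "ph \<in> P" using hi_in by (simp add: ph_def Pi_def)

lemma Fp_emb: "Fp u (emb \<pi>) y = G u w2 (snd y) + \<pi> * (G u w1 (fst y) - G u w2 (snd y))"
  using w12 by (simp add: Fp_def emb_def algebra_simps)

definition Rr :: "('a \<Rightarrow> 'w \<Rightarrow> real) \<Rightarrow> real \<times> real \<Rightarrow> real" where
  "Rr u y = min (Fp u pl y) (Fp u ph y)"

lemma Fp_lower: assumes "p \<in> P" shows "Rr u y \<le> Fp u p y"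
proof -
  define \<pi> where "\<pi> = p w1"
  have pe: "p = emb \<pi>" using prior_emb[OF assms] by (simp add: \<pi>_def)
  have "lo \<le> \<pi>" "\<pi> \<le> hi" using Pi_mem[OF assms] Pi_bdd unfolding lo_def hi_def \<pi>_def
    by (auto intro: cInf_lower cSup_upper)
  define D where "D = G u w1 (fst y) - G u w2 (snd y)"
  show ?thesis
  proof (cases "D \<ge> 0")
    case True
    have "lo * D \<le> \<pi> * D" using True \<open>lo \<le> \<pi>\<close> by (intro mult_right_mono)
    then show ?thesis unfolding Rr_def pl_def pe Fp_emb D_def[symmetric] by simp
  next
    case False
    have "hi * D \<le> \<pi> * D" using False \<open>\<pi> \<le> hi\<close> by (intro mult_right_mono_neg) auto
    then show ?thesis unfolding Rr_def ph_def pe Fp_emb D_def[symmetric] by simp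
  qed
qed

lemma INF_Fp: "(INF p\<in>P. Fp u p y) = Rr u y"
proof (rule antisym)
  have bdd: "bdd_below ((\<lambda>p. Fp u p y) ` P)" using Fp_lower by (intro bdd_belowI2) 
  have "(INF p\<in>P. Fp u p y) \<le> Fp u pl y" by (rule cINF_lower[OF bdd pl_in])
  moreover have "(INF p\<in>P. Fp u p y) \<le> Fp u ph y" by (rule cINF_lower[OF bdd ph_in])
  ultimately show "(INF p\<in>P. Fp u p y) \<le> Rr u y" by (simp add: Rr_def)
  show "Rr u y \<le> (INF p\<in>P. Fp u p y)" using Fp_lower Pne by (intro cINF_greatest) auto
qed

lemma mu_X: "is_exp M \<sigma> \<Longrightarrow> is_strat M \<tau> \<Longrightarrow> mu P u M \<sigma> \<tau> = Rr u (X M \<sigma> \<tau>)"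
  unfolding mu_def by (simp add: eu_X INF_Fp)

definition kc where "kc u p = p w1 * u a2 w1 + p w2 * u a2 w2"
definition cc where "cc u p = p w1 * (u a1 w1 - u a2 w1)"
definition ec where "ec u p = p w2 * (u a1 w2 - u a2 w2)"

lemma Fp_aff: "Fp u p = aff (kc u p) (cc u p) (ec u p)"
  by (rule ext) (simp add: Fp_def G_def aff_def kc_def cc_def ec_def algebra_simps)

lemma Rr_aff: "Rr u = (\<lambda>y. min (aff (kc u pl) (cc u pl) (ec u pl) y) (aff (kc u ph) (cc u ph) (ec u ph) y))"
  by (rule ext) (simp add: Rr_def Fp_aff)

lemma Rr_cont: "continuous_on S (Rr u)"
  unfolding Rr_aff aff_def by (intro continuous_intros)

definition Box :: "(real \<times> real) set" where "Box = {0..1} \<times> {0..1}"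

lemma Box_compact: "compact Box" unfolding Box_def by (intro compact_Times compact_Icc)
lemma Box_closed: "closed Box" using Box_compact by (rule compact_imp_closed)

lemma aff_bound: "y \<in> Box \<Longrightarrow> \<bar>aff k c e y\<bar> \<le> \<bar>k\<bar> + \<bar>c\<bar> + \<bar>e\<bar>"
proof -
  assume y: "y \<in> Box"
  have "\<bar>c * fst y\<bar> \<le> \<bar>c\<bar>" using y unfolding Box_def abs_mult by (auto intro!: mult_left_le)
  moreover have "\<bar>e * snd y\<bar> \<le> \<bar>e\<bar>" using y unfolding Box_def abs_mult by (auto intro!: mult_left_le)
  ultimately show ?thesis unfolding aff_def by linarith
qed

definition Bnd where "Bnd u = (\<bar>kc u pl\<bar> + \<bar>cc u pl\<bar> + \<bar>ec u pl\<bar>) + (\<bar>kc u ph\<bar> + \<bar>cc u ph\<bar> + \<bar>ec u ph\<bar>)"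

lemma Rr_bound: "y \<in> Box \<Longrightarrow> \<bar>Rr u y\<bar> \<le> Bnd u"
  using aff_bound[of y "kc u pl" "cc u pl" "ec u pl"] aff_bound[of y "kc u ph" "cc u ph" "ec u ph"]
  unfolding Rr_aff Bnd_def by (simp add: abs_le_iff) linarith

lemma X_Box: assumes "is_exp M \<sigma>" "is_strat M \<tau>" shows "X M \<sigma> \<tau> \<in> Box"
proof -
  have r: "0 \<le> (\<Sum>m\<in>M. \<sigma> w m * \<tau> m a1) \<and> (\<Sum>m\<in>M. \<sigma> w m * \<tau> m a1) \<le> 1" for w
  proof
    show "0 \<le> (\<Sum>m\<in>M. \<sigma> w m * \<tau> m a1)"
      using assms strat_range by (intro sum_nonneg) (auto simp: is_exp_def)
    have "(\<Sum>m\<in>M. \<sigma> w m * \<tau> m a1) \<le> (\<Sum>m\<in>M. \<sigma> w m)"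
      using assms strat_range by (intro sum_mono) (auto simp: is_exp_def intro!: mult_left_le)
    then show "(\<Sum>m\<in>M. \<sigma> w m * \<tau> m a1) \<le> 1" using assms by (simp add: is_exp_def)
  qed
  show ?thesis using r[of w1] r[of w2] by (simp add: Box_def X_def)
qed

definition gtau :: "real \<Rightarrow> real \<Rightarrow> (nat \<Rightarrow> 'a \<Rightarrow> real) \<Rightarrow> nat \<Rightarrow> 'a \<Rightarrow> real" where
  "gtau a b \<tau> = (\<lambda>m act. if act = a1 then a * \<tau> m a1 + b * (1 - \<tau> m a1)
      else 1 - (a * \<tau> m a1 + b * (1 - \<tau> m a1)))"

lemma mix01: "0 \<le> a \<Longrightarrow> a \<le> 1 \<Longrightarrow> 0 \<le> b \<Longrightarrow> b \<le> 1 \<Longrightarrow> 0 \<le> t \<Longrightarrow> t \<le> 1 \<Longrightarrow>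
    0 \<le> a * t + b * (1 - t) \<and> a * t + b * (1 - t) \<le> (1::real)"
proof -
  assume h: "0 \<le> a" "a \<le> 1" "0 \<le> b" "b \<le> 1" "0 \<le> t" "t \<le> 1"
  have "a * t \<le> 1 * t" using h by (intro mult_right_mono) auto
  moreover have "b * (1 - t) \<le> 1 * (1 - t)" using h by (intro mult_right_mono) auto
  moreover have "0 \<le> a * t" "0 \<le> b * (1 - t)" using h by auto
  ultimately show ?thesis by simp
qed

lemma gtau_strat:
  assumes "is_strat M \<tau>" "0 \<le> a" "a \<le> 1" "0 \<le> b" "b \<le> 1"
  shows "is_strat M (gtau a b \<tau>)"
  unfolding is_strat_def
proof (intro ballI conjI allI)
  fix m act assume m: "m \<in> M"
  have r: "0 \<le> a * \<tau> m a1 + b * (1 - \<tau> m a1) \<and> a * \<tau> m a1 + b * (1 - \<tau> m a1) \<le> 1"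
    using strat_range[OF assms(1) m] assms by (intro mix01) auto
  show "0 \<le> gtau a b \<tau> m act" using r by (simp add: gtau_def)
  show "(\<Sum>act\<in>UNIV. gtau a b \<tau> m act) = 1" using a12 by (simp add: sumA gtau_def)
qed

lemma X_gtau:
  assumes "is_exp M \<sigma>"
  shows "X M \<sigma> (gtau a b \<tau>) = garb a b (X M \<sigma> \<tau>)"
proof -
  have s1: "(\<Sum>m\<in>M. \<sigma> w m) = 1" for w using assms by (simp add: is_exp_def)
  have e: "(\<Sum>m\<in>M. \<sigma> w m * (a * \<tau> m a1 + b * (1 - \<tau> m a1)))
      = a * (\<Sum>m\<in>M. \<sigma> w m * \<tau> m a1) + b * (1 - (\<Sum>m\<in>M. \<sigma> w m * \<tau> m a1))" for w
  proof -
    have "(\<Sum>m\<in>M. \<sigma> w m * (a * \<tau> m a1 + b * (1 - \<tau> m a1)))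
        = (\<Sum>m\<in>M. a * (\<sigma> w m * \<tau> m a1) + b * \<sigma> w m - b * (\<sigma> w m * \<tau> m a1))"
      by (simp add: algebra_simps)
    also have "\<dots> = a * (\<Sum>m\<in>M. \<sigma> w m * \<tau> m a1) + b * (\<Sum>m\<in>M. \<sigma> w m) - b * (\<Sum>m\<in>M. \<sigma> w m * \<tau> m a1)"
      by (simp add: sum.distrib sum_subtractf sum_distrib_left)
    finally show ?thesis using s1[of w] by (simp add: algebra_simps)
  qed
  show ?thesis by (simp add: X_def gtau_def garb_def e)
qed

definition rexp :: "real \<times> real \<Rightarrow> 'w \<Rightarrow> nat \<Rightarrow> real" where
  "rexp y = (\<lambda>w m. if m = 0 then (if w = w1 then fst y else snd y)
     else if m = 1 then (if w = w1 then 1 - fst y else 1 - snd y) else 0)"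

definition rtau :: "nat \<Rightarrow> 'a \<Rightarrow> real" where
  "rtau = (\<lambda>m act. if (m = 0) = (act = a1) then 1 else 0)"

lemma rexp_exp: "y \<in> Box \<Longrightarrow> is_exp {0,1} (rexp y)"
  unfolding is_exp_def rexp_def Box_def by auto

lemma rtau_strat: "is_strat {0,1} rtau"
  unfolding is_strat_def rtau_def using a12 by (auto simp: sumA)

lemma X_rexp: "X {0,1} (rexp y) \<tau> = garb (\<tau> 0 a1) (\<tau> 1 a1) y"
  by (simp add: X_def rexp_def garb_def w12[symmetric] algebra_simps)

lemma X_rexp_rtau: "X {0,1} (rexp y) rtau = y"
  unfolding X_rexp by (simp add: rtau_def garb_def)

lemma rtau_BR:
  assumes y: "y \<in> Box" and I: "\<forall>a b. 0 \<le> a \<longrightarrow> a \<le> 1 \<longrightarrow> 0 \<le> b \<longrightarrow> b \<le> 1 \<longrightarrow> Rr ur (garb a b y) \<le> Rr ur y"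
  shows "rtau \<in> BR_stat P ur {0,1} (rexp y)"
  unfolding BR_stat_def
proof (intro CollectI conjI allI impI)
  show "is_strat {0,1} rtau" by (rule rtau_strat)
  fix \<tau>' :: "nat \<Rightarrow> 'a \<Rightarrow> real" assume t: "is_strat {0, 1} \<tau>'"
  have r0: "0 \<le> \<tau>' 0 a1 \<and> \<tau>' 0 a1 \<le> 1" and r1: "0 \<le> \<tau>' 1 a1 \<and> \<tau>' 1 a1 \<le> 1"
    using strat_range[OF t] by auto
  show "mu P ur {0, 1} (rexp y) \<tau>' \<le> mu P ur {0, 1} (rexp y) rtau"
  proof -
    have e1: "mu P ur {0,1} (rexp y) \<tau>' = Rr ur (garb (\<tau>' 0 a1) (\<tau>' 1 a1) y)"
      by (subst mu_X[OF rexp_exp[OF y] t]) (simp only: X_rexp)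
    have e2: "mu P ur {0,1} (rexp y) rtau = Rr ur y"
      by (subst mu_X[OF rexp_exp[OF y] rtau_strat]) (simp only: X_rexp_rtau)
    show ?thesis unfolding e1 e2 using I r0 r1 by blast
  qed
qed

end


context two_setup begin

lemma closure_ge:
  fixes f :: "real \<times> real \<Rightarrow> real"
  assumes "continuous_on UNIV f" "\<forall>x\<in>S. c \<le> f x" "z \<in> closure S"
  shows "c \<le> f z"
proof -
  have "closed {x. c \<le> f x}" using assms(1) by (intro closed_Collect_le continuous_intros) auto
  then have "closure S \<subseteq> {x. c \<le> f x}" using assms(2) by (intro closure_minimal) auto
  then show ?thesis using assms(3) by auto
qed

lemma garb_Box: "y \<in> Box \<Longrightarrow> 0 \<le> a \<Longrightarrow> a \<le> 1 \<Longrightarrow> 0 \<le> b \<Longrightarrow> b \<le> 1 \<Longrightarrow> garb a b y \<in> Box"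
  unfolding Box_def garb_def using mix01 by auto

lemma Rr_lower: "y \<in> Box \<Longrightarrow> - Bnd u \<le> Rr u y"
  using Rr_bound[of y u] by (simp add: abs_le_iff)

lemma Rr_upper: "y \<in> Box \<Longrightarrow> Rr u y \<le> Bnd u"
  using Rr_bound[of y u] by (simp add: abs_le_iff)

theorem main:
  fixes us ur :: "'a \<Rightarrow> 'w \<Rightarrow> real"
  shows "V_amb P us ur \<le> V_stat P us ur"
proof -
  define VS where "VS = {mu P us M \<sigma> \<tau> | M \<sigma> \<tau>. finite M \<and> is_exp M \<sigma> \<and> \<tau> \<in> BR_stat P ur M \<sigma>}"
  have VSd: "V_stat P us ur = Sup VS" by (simp add: V_stat_def VS_def)
  have VS_bdd: "bdd_above VS"
  proof (rule bdd_aboveI[where M = "Bnd us"])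
    fix x assume "x \<in> VS"
    then obtain M \<sigma> \<tau> where x: "x = mu P us M \<sigma> \<tau>" "is_exp M \<sigma>" "\<tau> \<in> BR_stat P ur M \<sigma>"
      unfolding VS_def by blast
    then have "is_strat M \<tau>" by (simp add: BR_stat_def)
    then show "x \<le> Bnd us" using x by (simp add: mu_X X_Box Rr_upper)
  qed
  have VS_ge: "Rr us y \<le> V_stat P us ur"
    if y: "y \<in> Box" and I: "\<forall>a b. 0 \<le> a \<longrightarrow> a \<le> 1 \<longrightarrow> 0 \<le> b \<longrightarrow> b \<le> 1 \<longrightarrow> Rr ur (garb a b y) \<le> Rr ur y" for y
  proof -
    have "Rr us y = mu P us {0,1} (rexp y) rtau"
      by (subst mu_X[OF rexp_exp[OF y] rtau_strat]) (simp only: X_rexp_rtau)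
    also have "\<dots> \<in> VS" unfolding VS_def using rtau_BR[OF y I] rexp_exp[OF y] by blast
    finally show ?thesis unfolding VSd using VS_bdd by (rule cSup_upper)
  qed
  define VA where "VA = {U_amb P us M \<Sigma> \<tau> | M \<Sigma> \<tau>. finite M \<and> amb_exp M \<Sigma> \<and> \<tau> \<in> BR_amb P ur M \<Sigma>}"
  have VAd: "V_amb P us ur = Sup VA" by (simp add: V_amb_def VA_def)
  have VA_le: "x \<le> V_stat P us ur" if "x \<in> VA" for x
  proof -
    obtain M \<Sigma> \<tau> where x: "x = U_amb P us M \<Sigma> \<tau>" "finite M" "amb_exp M \<Sigma>" "\<tau> \<in> BR_amb P ur M \<Sigma>"
      using \<open>x \<in> VA\<close> unfolding VA_def by blast
    have Sne: "\<Sigma> \<noteq> {}" and Sexp: "\<And>\<sigma>. \<sigma> \<in> \<Sigma> \<Longrightarrow> is_exp M \<sigma>" and Sconv: "fconvex2 \<Sigma>"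
      using x(3) by (auto simp: amb_exp_def)
    have ts: "is_strat M \<tau>" using x(4) by (simp add: BR_amb_def)
    have U_eq: "U_amb P u M \<Sigma> \<tau>' = (INF \<sigma>\<in>\<Sigma>. Rr u (X M \<sigma> \<tau>'))" if "is_strat M \<tau>'" for u \<tau>'
      unfolding U_amb_def by (rule arg_cong[where f=Inf], rule image_cong) (auto simp: mu_X Sexp that)
    have bdd: "bdd_below ((\<lambda>\<sigma>. Rr u (f \<sigma>)) ` \<Sigma>)" if "\<And>\<sigma>. \<sigma> \<in> \<Sigma> \<Longrightarrow> f \<sigma> \<in> Box" for u f
      using that Rr_lower by (intro bdd_belowI2) blast
    define K0 where "K0 = (\<lambda>\<sigma>. X M \<sigma> \<tau>) ` \<Sigma>"
    have K0B: "K0 \<subseteq> Box" unfolding K0_def using X_Box Sexp ts by blast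
    have K0c: "convex K0"
      unfolding convex_def
    proof (intro ballI allI impI)
      fix x y :: "real \<times> real" and u v :: real
      assume xy: "x \<in> K0" "y \<in> K0" and uv: "0 \<le> u" "0 \<le> v" "u + v = 1"
      obtain \<sigma>1 \<sigma>2 where s: "\<sigma>1 \<in> \<Sigma>" "\<sigma>2 \<in> \<Sigma>" "x = X M \<sigma>1 \<tau>" "y = X M \<sigma>2 \<tau>"
        using xy unfolding K0_def by blast
      define \<sigma>m where "\<sigma>m = (\<lambda>x y. u * \<sigma>1 x y + (1 - u) * \<sigma>2 x y)"
      have "\<sigma>m \<in> \<Sigma>" using Sconv s uv unfolding fconvex2_def \<sigma>m_def by auto
      moreover have "X M \<sigma>m \<tau> = u *\<^sub>R x + v *\<^sub>R y"
      proof -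
        have v: "v = 1 - u" using uv by simp
        have e: "(\<Sum>m\<in>M. (u * \<sigma>1 w m + (1 - u) * \<sigma>2 w m) * \<tau> m a1)
            = u * (\<Sum>m\<in>M. \<sigma>1 w m * \<tau> m a1) + (1 - u) * (\<Sum>m\<in>M. \<sigma>2 w m * \<tau> m a1)" for w
          by (simp add: sum.distrib sum_distrib_left distrib_right mult.assoc)
        show ?thesis unfolding s v X_def \<sigma>m_def e by simp
      qed
      ultimately show "u *\<^sub>R x + v *\<^sub>R y \<in> K0" unfolding K0_def by (metis image_eqI)
    qed
    define K where "K = closure K0"
    have Kcomp: "compact K" unfolding K_def
      using compact_closure bounded_subset[OF compact_imp_bounded[OF Box_compact] K0B] by blast
    have Kconv: "convex K" unfolding K_def using K0c by simp
    have K0ne: "K0 \<noteq> {}" unfolding K0_def using Sne by simp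
    have Kne: "K \<noteq> {}" unfolding K_def using K0ne closure_subset by blast
    have KB: "K \<subseteq> Box" unfolding K_def using K0B Box_closed by (rule closure_minimal)
    have XK: "X M \<sigma> \<tau> \<in> K" if "\<sigma> \<in> \<Sigma>" for \<sigma>
    proof -
      have "X M \<sigma> \<tau> \<in> K0" unfolding K0_def using that by (rule imageI)
      then show ?thesis unfolding K_def using closure_subset[of K0] by (rule subsetD[rotated])
    qed
    have BR: "(INF \<sigma>\<in>\<Sigma>. Rr ur (garb a b (X M \<sigma> \<tau>))) \<le> (INF \<sigma>\<in>\<Sigma>. Rr ur (X M \<sigma> \<tau>))"
      if ab: "0 \<le> a" "a \<le> 1" "0 \<le> b" "b \<le> 1" for a b
    proof -
      have gs: "is_strat M (gtau a b \<tau>)" using gtau_strat[OF ts ab] .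
      have "U_amb P ur M \<Sigma> (gtau a b \<tau>) \<le> U_amb P ur M \<Sigma> \<tau>"
        using x(4) gs by (simp add: BR_amb_def)
      moreover have "U_amb P ur M \<Sigma> (gtau a b \<tau>) = (INF \<sigma>\<in>\<Sigma>. Rr ur (garb a b (X M \<sigma> \<tau>)))"
        unfolding U_eq[OF gs] by (rule arg_cong[where f=Inf], rule image_cong) (auto simp: X_gtau Sexp)
      ultimately show ?thesis using U_eq[OF ts] by simp
    qed
    have lowK: "(INF \<sigma>\<in>\<Sigma>. Rr u (X M \<sigma> \<tau>)) \<le> Rr u z" if "z \<in> K" for u z
    proof (rule closure_ge[OF Rr_cont _ that[unfolded K_def]])
      show "\<forall>x\<in>K0. (INF \<sigma>\<in>\<Sigma>. Rr u (X M \<sigma> \<tau>)) \<le> Rr u x"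
        unfolding K0_def using bdd[of "\<lambda>\<sigma>. X M \<sigma> \<tau>" u] X_Box Sexp ts by (auto intro: cINF_lower)
    qed
    have H: "\<exists>y\<in>K. \<forall>z\<in>K. Rr ur (garb a b y) < Rr ur z + \<delta>"
      if ab: "0 \<le> a" "a \<le> 1" "0 \<le> b" "b \<le> 1" and d: "\<delta> > 0" for a b \<delta>
    proof -
      have "(INF \<sigma>\<in>\<Sigma>. Rr ur (garb a b (X M \<sigma> \<tau>))) < (INF \<sigma>\<in>\<Sigma>. Rr ur (X M \<sigma> \<tau>)) + \<delta>"
        using BR[OF ab] d by linarith
      then obtain \<sigma> where s: "\<sigma> \<in> \<Sigma>" "Rr ur (garb a b (X M \<sigma> \<tau>)) < (INF \<sigma>\<in>\<Sigma>. Rr ur (X M \<sigma> \<tau>)) + \<delta>"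
        using cINF_less_iff[OF Sne bdd[of "\<lambda>\<sigma>. garb a b (X M \<sigma> \<tau>)" ur]] X_Box Sexp ts garb_Box ab
        by blast
      show ?thesis using s XK lowK by (meson add_le_cancel_right order_less_le_trans)
    qed
    obtain y where y: "y \<in> K" and I: "\<forall>a b. 0 \<le> a \<longrightarrow> a \<le> 1 \<longrightarrow> 0 \<le> b \<longrightarrow> b \<le> 1 \<longrightarrow> Rr ur (garb a b y) \<le> Rr ur y"
      using planar[OF Kcomp Kconv Kne H[unfolded Rr_aff]] unfolding Rr_aff by blast
    have yB: "y \<in> Box" using y KB by blast
    have "x = (INF \<sigma>\<in>\<Sigma>. Rr us (X M \<sigma> \<tau>))" using x(1) U_eq[OF ts] by simp
    also have "\<dots> \<le> Rr us y" by (rule lowK[OF y])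
    also have "\<dots> \<le> V_stat P us ur" by (rule VS_ge[OF yB I])
    finally show ?thesis .
  qed
  have VA_ne: "VA \<noteq> {}"
  proof -
    have Bne: "Box \<noteq> {}" unfolding Box_def by auto
    obtain y where y: "y \<in> Box" and ymax: "\<And>z. z \<in> Box \<Longrightarrow> Rr ur z \<le> Rr ur y"
      using continuous_attains_sup[OF Box_compact Bne Rr_cont] by blast
    have I: "\<forall>a b. 0 \<le> a \<longrightarrow> a \<le> 1 \<longrightarrow> 0 \<le> b \<longrightarrow> b \<le> 1 \<longrightarrow> Rr ur (garb a b y) \<le> Rr ur y"
      using ymax garb_Box y by blast
    have BRs: "rtau \<in> BR_stat P ur {0,1} (rexp y)" by (rule rtau_BR[OF y I])
    have fc: "fconvex2 {rexp y}"
      unfolding fconvex2_def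
    proof (intro ballI allI impI)
      fix f g t assume "f \<in> {rexp y}" "g \<in> {rexp y}" "0 \<le> (t::real) \<and> t \<le> 1"
      then have fg: "f = rexp y" "g = rexp y" by auto
      have "(\<lambda>x y. t * f x y + (1 - t) * g x y) = rexp y"
        unfolding fg by (intro ext) (simp add: algebra_simps)
      then show "(\<lambda>x y. t * f x y + (1 - t) * g x y) \<in> {rexp y}" by simp
    qed
    have ae: "amb_exp {0,1} {rexp y}"
      unfolding amb_exp_def using fc rexp_exp[OF y] by auto
    have BRa: "rtau \<in> BR_amb P ur {0,1} {rexp y}"
      using BRs by (simp add: BR_amb_def BR_stat_def U_amb_def)
    have "U_amb P us {0,1} {rexp y} rtau \<in> VA" unfolding VA_def using ae BRa by blast
    then show ?thesis by blast
  qed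
  show ?thesis unfolding VAd using VA_ne VA_le by (rule cSup_least)
qed

end

theorem theorem1:
  fixes P :: "('w::finite \<Rightarrow> real) set"
    and us ur :: "'a::finite \<Rightarrow> 'w \<Rightarrow> real"
  assumes "CARD('w) = 2" and "CARD('a) = 2"
    and "prior_set P"
  shows "V_amb P us ur \<le> V_stat P us ur"
  proof -
  obtain w1 w2 :: 'w where W: "(UNIV::'w set) = {w1, w2}" "w1 \<noteq> w2"
    using assms(1) card_2_iff by metis
  obtain a1 a2 :: 'a where A: "(UNIV::'a set) = {a1, a2}" "a1 \<noteq> a2"
    using assms(2) card_2_iff by metis
  interpret two_setup w1 w2 a1 a2 P
    using W A assms(3) by unfold_locales auto
  show ?thesis by (rule main)
qed

end
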